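(* For the cycle $C_n$ on $n\ge 3$ vertices: $IDI(C_n)=2$ if $n\ge 6$, and $IDI(C_3)=IDI(C_4)=IDI(C_5)=3$.
   Context: For a finite simple connected graph $G=(V,E)$ with diameter $d$, a rank assignment is a function $f:V\to\mathbb{R}$; under $f$, the string of a vertex $v$ is the $d$-vector whose $i$-th coordinate is the sum of $f(w)$ over all vertices $w$ with $d(v,w)=i$. The ID-index $IDI(G)$ is the minimum $k$ such that there exists $f:V\to\mathbb{R}$ with $|f(V)|=k$ under which all vertices have distinct strings. *)

theory Defs
  imports Main Complex_Main
begin

definition simple_graph :: "'a set \<Rightarrow> ('a \<times> 'a) set \<Rightarrow> bool" where
  "simple_graph V E \<longleftrightarrow> finite V \<and> E \<subseteq> V \<times> V \<and> sym E \<and> irrefl E"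

definition connected_graph :: "'a set \<Rightarrow> ('a \<times> 'a) set \<Rightarrow> bool" where
  "connected_graph V E \<longleftrightarrow> V \<noteq> {} \<and> (\<forall>u\<in>V. \<forall>v\<in>V. (u, v) \<in> E\<^sup>*)"

definition gdist :: "('a \<times> 'a) set \<Rightarrow> 'a \<Rightarrow> 'a \<Rightarrow> nat" where
  "gdist E u v = (LEAST k. (u, v) \<in> E ^^ k)"

definition diameter :: "'a set \<Rightarrow> ('a \<times> 'a) set \<Rightarrow> nat" where
  "diameter V E = Max {gdist E u v | u v. u \<in> V \<and> v \<in> V}"

definition vstring :: "'a set \<Rightarrow> ('a \<times> 'a) set \<Rightarrow> ('a \<Rightarrow> real) \<Rightarrow> 'a \<Rightarrow> real list" where
  "vstring V E f v = map (\<lambda>i. \<Sum>w\<in>{w\<in>V. gdist E v w = i}. f w) [1..<diameter V E + 1]"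

definition IDI :: "'a set \<Rightarrow> ('a \<times> 'a) set \<Rightarrow> nat" where
  "IDI V E = (LEAST k. \<exists>f :: 'a \<Rightarrow> real. card (f ` V) = k \<and> inj_on (vstring V E f) V)"

definition cycle_edges :: "nat \<Rightarrow> (nat \<times> nat) set" where
  "cycle_edges n = {(i, j). i < n \<and> j < n \<and> (j = (i + 1) mod n \<or> i = (j + 1) mod n)}"

end

theory Submission
  imports Defs
begin


definition cd :: "nat \<Rightarrow> nat \<Rightarrow> nat \<Rightarrow> nat" where
  "cd n i j = min (if i \<le> j then j - i else i - j) (n - (if i \<le> j then j - i else i - j))"

lemma cd_lower:
  assumes "(i, j) \<in> cycle_edges n ^^ k" "i < n"
  shows "cd n i j \<le> k"
  using assms(1)
proof (induction k arbitrary: j)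
  case 0
  then show ?case by (auto simp: cd_def)
next
  case (Suc k)
  then obtain m where m: "(i, m) \<in> cycle_edges n ^^ k" "(m, j) \<in> cycle_edges n"
    by (auto elim: relpow_Suc_E)
  have ih: "cd n i m \<le> k" using Suc.IH m(1) .
  from m(2) have "m < n" "j < n" "j = (m + 1) mod n \<or> m = (j + 1) mod n"
    by (auto simp: cycle_edges_def)
  then have "j = (if m + 1 = n then 0 else m + 1) \<or> m = (if j + 1 = n then 0 else j + 1)"
    by (metis Suc_eq_plus1 Suc_lessI mod_less mod_self)
  then show ?case using ih \<open>m < n\<close> \<open>j < n\<close> assms(2)
    unfolding cd_def by (auto split: if_splits)
qed

lemma edge_fwd: "0 < n \<Longrightarrow> m < n \<Longrightarrow> (m, (m + 1) mod n) \<in> cycle_edges n"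
  by (auto simp: cycle_edges_def)

lemma walk_fwd: "0 < n \<Longrightarrow> i < n \<Longrightarrow> (i, (i + k) mod n) \<in> cycle_edges n ^^ k"
proof (induction k)
  case 0 then show ?case by simp
next
  case (Suc k)
  have "((i + k) mod n, ((i + k) mod n + 1) mod n) \<in> cycle_edges n"
    using Suc.prems by (intro edge_fwd) auto
  moreover have "((i + k) mod n + 1) mod n = (i + Suc k) mod n"
    by (simp add: mod_Suc_eq)
  ultimately show ?case using Suc by (auto intro: relpow_Suc_I)
qed

lemma walk_bwd: "0 < n \<Longrightarrow> i < n \<Longrightarrow> ((i + k) mod n, i) \<in> cycle_edges n ^^ k"
proof (induction k)
  case 0 then show ?case by simp
next
  case (Suc k)
  have "((i + Suc k) mod n, (i + k) mod n) \<in> cycle_edges n"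
    using Suc.prems by (auto simp: cycle_edges_def mod_Suc_eq)
  then show ?case using Suc by (metis add_Suc_right relpow_Suc_I2)
qed

lemma cd_walk:
  assumes "0 < n" "i < n" "j < n"
  shows "(i, j) \<in> cycle_edges n ^^ cd n i j"
proof (cases "i \<le> j")
  case True
  show ?thesis
  proof (cases "j - i \<le> n - (j - i)")
    case True
    with \<open>i \<le> j\<close> have "cd n i j = j - i" by (simp add: cd_def)
    moreover have "(i + (j - i)) mod n = j" using \<open>i \<le> j\<close> assms by simp
    ultimately show ?thesis using walk_fwd[OF assms(1,2), of "j - i"] by simp
  next
    case False
    with \<open>i \<le> j\<close> have "cd n i j = n - (j - i)" by (simp add: cd_def)
    moreover have "(j + (n - (j - i))) mod n = i" using \<open>i \<le> j\<close> assms
      by (simp add: less_imp_le_nat)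
    ultimately show ?thesis using walk_bwd[OF assms(1,3), of "n - (j - i)"] by simp
  qed
next
  case False
  show ?thesis
  proof (cases "i - j \<le> n - (i - j)")
    case True
    with \<open>\<not> i \<le> j\<close> have "cd n i j = i - j" by (simp add: cd_def)
    moreover have "(j + (i - j)) mod n = i" using \<open>\<not> i \<le> j\<close> assms by simp
    ultimately show ?thesis using walk_bwd[OF assms(1,3), of "i - j"] by simp
  next
    case False
    with \<open>\<not> i \<le> j\<close> have "cd n i j = n - (i - j)" by (simp add: cd_def)
    moreover have "(i + (n - (i - j))) mod n = j" using \<open>\<not> i \<le> j\<close> assms
      by (simp add: less_imp_le_nat)
    ultimately show ?thesis using walk_fwd[OF assms(1,2), of "n - (i - j)"] by simp
  qed
qed

lemma gdist_cycle: "0 < n \<Longrightarrow> i < n \<Longrightarrow> j < n \<Longrightarrow> gdist (cycle_edges n) i j = cd n i j"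
  unfolding gdist_def by (rule Least_equality) (auto intro: cd_walk cd_lower)

lemma cd_le: "i < n \<Longrightarrow> j < n \<Longrightarrow> cd n i j \<le> n div 2"
  unfolding cd_def by auto

lemma diameter_cycle: "0 < n \<Longrightarrow> diameter {0..<n} (cycle_edges n) = n div 2"
  unfolding diameter_def
proof (rule Max_eqI)
  have "{gdist (cycle_edges n) u v |u v. u \<in> {0..<n} \<and> v \<in> {0..<n}}
     \<subseteq> (\<lambda>(u,v). gdist (cycle_edges n) u v) ` ({0..<n} \<times> {0..<n})" by auto
  then show "finite {gdist (cycle_edges n) u v |u v. u \<in> {0..<n} \<and> v \<in> {0..<n}}"
    by (rule finite_subset) auto
next
  fix y assume "0 < n" "y \<in> {gdist (cycle_edges n) u v |u v. u \<in> {0..<n} \<and> v \<in> {0..<n}}"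
  then show "y \<le> n div 2" using gdist_cycle cd_le by auto
next
  assume "0 < n"
  then have "gdist (cycle_edges n) 0 (n div 2) = n div 2"
    by (simp add: gdist_cycle cd_def)
  then show "n div 2 \<in> {gdist (cycle_edges n) u v |u v. u \<in> {0..<n} \<and> v \<in> {0..<n}}"
    using \<open>0 < n\<close> by (metis (mono_tags, lifting) atLeastLessThan_iff div_less_dividend le0 mem_Collect_eq one_less_numeral_iff semiring_norm(76))
qed

lemma vstring_cycle:
  assumes "0 < n" "v < n"
  shows "vstring {0..<n} (cycle_edges n) f v =
    map (\<lambda>i. \<Sum>w<n. if cd n v w = i then f w else 0) [1..<n div 2 + 1]"
  unfolding vstring_def diameter_cycle[OF assms(1)]
proof (rule map_cong[OF refl])
  fix i
  have "(\<Sum>w\<in>{w \<in> {0..<n}. gdist (cycle_edges n) v w = i}. f w) = (\<Sum>w\<in>{w \<in> {0..<n}. cd n v w = i}. f w)"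
    using assms by (intro sum.cong) (auto simp: gdist_cycle)
  also have "\<dots> = (\<Sum>w<n. if cd n v w = i then f w else 0)"
    by (simp add: sum.inter_filter[symmetric] lessThan_atLeast0)
  finally show "(\<Sum>w\<in>{w \<in> {0..<n}. gdist (cycle_edges n) v w = i}. f w) = (\<Sum>w<n. if cd n v w = i then f w else 0)" .
qed



lemma minS: "u = k + c \<Longrightarrow> (k::nat) \<le> n \<Longrightarrow> a = min k (n - k) \<Longrightarrow>
   (a + c = u \<and> 2 * u \<le> n + 2 * c) \<or> (a + u = n + c \<and> n + 2 * c < 2 * u)"
  by (cases "k \<le> n - k") (auto simp: min_def)

lemma reg: fixes n u a0 a1 a3 :: nat
  assumes n: "6 \<le> n" and u: "u < n" and ds: "a0 = min u (n - u)"
      "a1 = (if 1 \<le> u then min (u - 1) (n - (u - 1)) else min 1 (n - 1))"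
      "a3 = (if 3 \<le> u then min (u - 3) (n - (u - 3)) else min (3 - u) (n - (3 - u)))"
  shows
      "(u = 0 \<and> a0 = 0 \<and> a1 = 1 \<and> a3 = 3) \<or> (u = 1 \<and> a0 = 1 \<and> a1 = 0 \<and> a3 = 2) \<or>
      (u = 2 \<and> a0 = 2 \<and> a1 = 1 \<and> a3 = 1) \<or> (u = 3 \<and> a0 = 3 \<and> a1 = 2 \<and> a3 = 0) \<or>
      (4 \<le> u \<and> 2 * u \<le> n \<and> a0 = u \<and> a1 + 1 = u \<and> a3 + 3 = u) \<or>
      (n < 2 * u \<and> 2 * u \<le> n + 2 \<and> a0 + u = n \<and> a1 + 1 = u \<and> a3 + 3 = u) \<or>
      (n + 2 < 2 * u \<and> 2 * u \<le> n + 6 \<and> a0 + u = n \<and> a1 + u = n + 1 \<and> a3 + 3 = u) \<or>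
      (n + 6 < 2 * u \<and> a0 + u = n \<and> a1 + u = n + 1 \<and> a3 + u = n + 3)"
proof (cases "u < 4")
  case True
  have m: "min 1 (n - 1) = (1::nat)" "min 2 (n - 2) = (2::nat)" "min 3 (n - 3) = (3::nat)"
    using n by (simp_all add: min_def)
  consider "u = 0" | "u = 1" | "u = 2" | "u = 3" using True by linarith
  then show ?thesis
  proof cases
    case 1
    then have "a0 = 0" "a1 = 1" "a3 = 3" using ds m by simp_all
    then show ?thesis using 1 by blast
  next
    case 2
    then have "a0 = 1" "a1 = 0" "a3 = 2" using ds m by simp_all
    then show ?thesis using 2 by blast
  next
    case 3
    then have "a0 = 2" "a1 = 1" "a3 = 1" using ds m by simp_all
    then show ?thesis using 3 by blast
  next
    case 4
    then have "a0 = 3" "a1 = 2" "a3 = 0" using ds m by simp_all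
    then show ?thesis using 4 by blast
  qed
next
  case False
  have u4: "4 \<le> u" using False by simp
  have e0: "(a0 + 0 = u \<and> 2 * u \<le> n + 2 * 0) \<or> (a0 + u = n + 0 \<and> n + 2 * 0 < 2 * u)"
    by (rule minS[of u "u" 0 n a0]) (use u ds in auto)
  have e1: "(a1 + 1 = u \<and> 2 * u \<le> n + 2 * 1) \<or> (a1 + u = n + 1 \<and> n + 2 * 1 < 2 * u)"
    by (rule minS[of u "u - 1" 1 n a1]) (use u ds u4 in auto)
  have e3: "(a3 + 3 = u \<and> 2 * u \<le> n + 2 * 3) \<or> (a3 + u = n + 3 \<and> n + 2 * 3 < 2 * u)"
    by (rule minS[of u "u - 3" 3 n a3]) (use u ds u4 in auto)
  show ?thesis
  proof (cases "2 * u \<le> n")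
    case c1: True
    then have "a0 = u" "a1 + 1 = u" "a3 + 3 = u"
      using e0 e1 e3 by (elim disjE conjE; linarith)+
    then show ?thesis using u4 c1 by blast
  next
    case c1: False
    then have x0: "a0 + u = n" using e0 by (elim disjE conjE; linarith)
    show ?thesis
    proof (cases "2 * u \<le> n + 2")
      case c2: True
      then have "a1 + 1 = u" "a3 + 3 = u" using e1 e3 by (elim disjE conjE; linarith)+
      then show ?thesis using x0 c1 c2 by (simp add: not_le)
    next
      case c2: False
      then have x1: "a1 + u = n + 1" using e1 by (elim disjE conjE; linarith)
      show ?thesis
      proof (cases "2 * u \<le> n + 6")
        case c3: True
        then have "a3 + 3 = u" using e3 by (elim disjE conjE; linarith)
        then show ?thesis using x0 x1 c2 c3 by (simp add: not_le)
      next
        case c3: False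
        then have "a3 + u = n + 3" using e3 by (elim disjE conjE; linarith)
        then show ?thesis using x0 x1 c3 by (simp add: not_le)
      qed
    qed
  qed
qed

lemma fin2:
  fixes n u v a0 a1 a3 b0 b1 b3 :: nat
  assumes n: "6 \<le> n" and u: "u < n" and v: "v < n"
  and ru: "(u = 2 \<and> a0 = 2 \<and> a1 = 1 \<and> a3 = 1) \<or>
      (4 \<le> u \<and> 2 * u \<le> n \<and> a0 = u \<and> a1 + 1 = u \<and> a3 + 3 = u) \<or>
      (n < 2 * u \<and> 2 * u \<le> n + 2 \<and> a0 + u = n \<and> a1 + 1 = u \<and> a3 + 3 = u) \<or>
      (n + 2 < 2 * u \<and> 2 * u \<le> n + 6 \<and> a0 + u = n \<and> a1 + u = n + 1 \<and> a3 + 3 = u) \<or>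
      (n + 6 < 2 * u \<and> a0 + u = n \<and> a1 + u = n + 1 \<and> a3 + u = n + 3)"
  and rv: "(v = 2 \<and> b0 = 2 \<and> b1 = 1 \<and> b3 = 1) \<or>
      (4 \<le> v \<and> 2 * v \<le> n \<and> b0 = v \<and> b1 + 1 = v \<and> b3 + 3 = v) \<or>
      (n < 2 * v \<and> 2 * v \<le> n + 2 \<and> b0 + v = n \<and> b1 + 1 = v \<and> b3 + 3 = v) \<or>
      (n + 2 < 2 * v \<and> 2 * v \<le> n + 6 \<and> b0 + v = n \<and> b1 + v = n + 1 \<and> b3 + 3 = v) \<or>
      (n + 6 < 2 * v \<and> b0 + v = n \<and> b1 + v = n + 1 \<and> b3 + v = n + 3)"
  and sm: "a0 + a1 + a3 = b0 + b1 + b3"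
  and mA: "1 \<le> a3 \<longrightarrow> a3 = b0 \<or> a3 = b1 \<or> a3 = b3"
  and mB: "1 \<le> b3 \<longrightarrow> b3 = a0 \<or> b3 = a1 \<or> b3 = a3"
  shows "u = v"
  using ru rv sm n u v
  apply (elim disjE conjE; (linarith)?)
  apply (insert mA mB, elim impE disjE; linarith)+
  done
lemma core:
  fixes n u v :: nat
  assumes n: "6 \<le> n" and u: "u < n" and v: "v < n"
  and H: "\<And>i. 1 \<le> i \<Longrightarrow> i \<le> n div 2 \<Longrightarrow>
     (if cd n u 0 = i then 1 else 0) + (if cd n u 1 = i then 1 else 0) + (if cd n u 3 = i then 1 else (0::int))
   = (if cd n v 0 = i then 1 else 0) + (if cd n v 1 = i then 1 else 0) + (if cd n v 3 = i then 1 else 0)"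
  shows "u = v"
proof -
  have le: "cd n u 0 \<le> n div 2" "cd n u 1 \<le> n div 2" "cd n u 3 \<le> n div 2"
     "cd n v 0 \<le> n div 2" "cd n v 1 \<le> n div 2" "cd n v 3 \<le> n div 2"
    using n u v by (auto intro!: cd_le)
  define a0 where "a0 = cd n u 0"
  define a1 where "a1 = cd n u 1"
  define a3 where "a3 = cd n u 3"
  define b0 where "b0 = cd n v 0"
  define b1 where "b1 = cd n v 1"
  define b3 where "b3 = cd n v 3"
  have ds: "a0 = min u (n - u)" "a1 = (if 1 \<le> u then min (u - 1) (n - (u - 1)) else min 1 (n - 1))"
    "a3 = (if 3 \<le> u then min (u - 3) (n - (u - 3)) else min (3 - u) (n - (3 - u)))"
    "b0 = min v (n - v)" "b1 = (if 1 \<le> v then min (v - 1) (n - (v - 1)) else min 1 (n - 1))"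
    "b3 = (if 3 \<le> v then min (v - 3) (n - (v - 3)) else min (3 - v) (n - (3 - v)))"
    unfolding a0_def a1_def a3_def b0_def b1_def b3_def cd_def by auto
  define d where "d = n div 2"
  have h: "2 * d \<le> n" "n \<le> 2 * d + 1" unfolding d_def by auto
  have HH: "\<And>i. 1 \<le> i \<Longrightarrow> i \<le> d \<Longrightarrow>
     (if a0 = i then 1 else 0) + (if a1 = i then 1 else 0) + (if a3 = i then 1 else (0::int))
   = (if b0 = i then 1 else 0) + (if b1 = i then 1 else 0) + (if b3 = i then 1 else 0)"
    using H unfolding a0_def a1_def a3_def b0_def b1_def b3_def d_def .
  have le': "a0 \<le> d" "a1 \<le> d" "a3 \<le> d" "b0 \<le> d" "b1 \<le> d" "b3 \<le> d"
    using le unfolding a0_def a1_def a3_def b0_def b1_def b3_def d_def .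
  have cnt0: "(\<Sum>i\<in>{1..d}. (if a0 = i then 1 else 0) + (if a1 = i then 1 else 0) + (if a3 = i then 1 else (0::int)))
     = (\<Sum>i\<in>{1..d}. (if b0 = i then 1 else 0) + (if b1 = i then 1 else 0) + (if b3 = i then 1 else (0::int)))"
    by (rule sum.cong[OF refl], rule HH) auto
  then have cnt: "(if 1 \<le> a0 then 1 else 0) + (if 1 \<le> a1 then 1 else 0) + (if 1 \<le> a3 then 1 else (0::int))
      = (if 1 \<le> b0 then 1 else 0) + (if 1 \<le> b1 then 1 else 0) + (if 1 \<le> b3 then 1 else 0)"
    using le' by (simp add: sum.distrib sum.delta')
  have ifmul: "\<And>P k. (k::int) * (if P then 1 else 0) = (if P then k else 0)" by simp
  have sm0: "(\<Sum>i\<in>{1..d}. (if a0 = i then int i else 0) + (if a1 = i then int i else 0) + (if a3 = i then int i else 0))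
     = (\<Sum>i\<in>{1..d}. (if b0 = i then int i else 0) + (if b1 = i then int i else 0) + (if b3 = i then int i else 0))"
  proof (rule sum.cong)
    fix i assume "i \<in> {1..d}"
    then have "int i * ((if a0 = i then 1 else 0) + (if a1 = i then 1 else 0) + (if a3 = i then 1 else (0::int)))
      = int i * ((if b0 = i then 1 else 0) + (if b1 = i then 1 else 0) + (if b3 = i then 1 else (0::int)))"
      using HH by auto
    then show "(if a0 = i then int i else 0) + (if a1 = i then int i else 0) + (if a3 = i then int i else 0) =
         (if b0 = i then int i else 0) + (if b1 = i then int i else 0) + (if b3 = i then int i else 0)"
      by (simp only: distrib_left ifmul)
  qed simp
  then have "int a0 + int a1 + int a3 = int b0 + int b1 + int b3"
    using le' by (simp add: sum.distrib sum.delta' split: if_splits)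
  then have sm: "a0 + a1 + a3 = b0 + b1 + b3" by linarith
  have memA: "x = b0 \<or> x = b1 \<or> x = b3" if "x \<in> {a0, a1, a3}" "1 \<le> x" for x
  proof -
    have "x \<le> d" using that le' by auto
    have "1 \<le> (if a0 = x then 1 else 0) + (if a1 = x then 1 else 0) + (if a3 = x then 1 else (0::int))" using that(1) by auto
    then have r: "1 \<le> (if b0 = x then 1 else 0) + (if b1 = x then 1 else 0) + (if b3 = x then 1 else (0::int))"
      using HH[OF \<open>1 \<le> x\<close> \<open>x \<le> d\<close>] by simp
    show ?thesis
    proof (rule ccontr)
      assume "\<not> ?thesis"
      then show False using r by auto
    qed
  qed
  have memB: "x = a0 \<or> x = a1 \<or> x = a3" if "x \<in> {b0, b1, b3}" "1 \<le> x" for x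
  proof -
    have "x \<le> d" using that le' by auto
    have "1 \<le> (if b0 = x then 1 else 0) + (if b1 = x then 1 else 0) + (if b3 = x then 1 else (0::int))" using that(1) by auto
    then have r: "1 \<le> (if a0 = x then 1 else 0) + (if a1 = x then 1 else 0) + (if a3 = x then 1 else (0::int))"
      using HH[OF \<open>1 \<le> x\<close> \<open>x \<le> d\<close>] by simp
    show ?thesis
    proof (rule ccontr)
      assume "\<not> ?thesis"
      then show False using r by auto
    qed
  qed
  have cntA: "(if 1 \<le> a0 then 1 else 0) + (if 1 \<le> a1 then 1 else 0) + (if 1 \<le> a3 then 1 else (0::int))
     = (if u = 0 \<or> u = 1 \<or> u = 3 then 2 else 3)"
    using reg[OF n u ds(1-3)] u by (elim disjE conjE; simp)
  have cntB: "(if 1 \<le> b0 then 1 else 0) + (if 1 \<le> b1 then 1 else 0) + (if 1 \<le> b3 then 1 else (0::int))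
     = (if v = 0 \<or> v = 1 \<or> v = 3 then 2 else 3)"
    using reg[OF n v ds(4-6)] v by (elim disjE conjE; simp)
  have flag: "(u = 0 \<or> u = 1 \<or> u = 3) = (v = 0 \<or> v = 1 \<or> v = 3)"
    using cnt cntA cntB by (auto split: if_splits)
  have mA: "1 \<le> a3 \<longrightarrow> a3 = b0 \<or> a3 = b1 \<or> a3 = b3" using memA by auto
  have mB: "1 \<le> b3 \<longrightarrow> b3 = a0 \<or> b3 = a1 \<or> b3 = a3" using memB by auto
  note ru = reg[OF n u ds(1-3)] and rv = reg[OF n v ds(4-6)]
  show ?thesis
  proof (cases "u = 0 \<or> u = 1 \<or> u = 3")
    case True
    with flag have "v = 0 \<or> v = 1 \<or> v = 3" by simp
    note vS = this
    have su: "a0 + a1 + a3 = (if u = 0 then 4 else if u = 1 then 3 else 5)"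
      using ru True n by (elim disjE conjE; simp)
    have sv: "b0 + b1 + b3 = (if v = 0 then 4 else if v = 1 then 3 else 5)"
      using rv vS n by (elim disjE conjE; simp)
    show ?thesis using su sv sm True vS by (auto split: if_splits)
  next
    case False
    with flag have vS: "\<not> (v = 0 \<or> v = 1 \<or> v = 3)" by simp
    from ru False have ru': "(u = 2 \<and> a0 = 2 \<and> a1 = 1 \<and> a3 = 1) \<or>
      (4 \<le> u \<and> 2 * u \<le> n \<and> a0 = u \<and> a1 + 1 = u \<and> a3 + 3 = u) \<or>
      (n < 2 * u \<and> 2 * u \<le> n + 2 \<and> a0 + u = n \<and> a1 + 1 = u \<and> a3 + 3 = u) \<or>
      (n + 2 < 2 * u \<and> 2 * u \<le> n + 6 \<and> a0 + u = n \<and> a1 + u = n + 1 \<and> a3 + 3 = u) \<or>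
      (n + 6 < 2 * u \<and> a0 + u = n \<and> a1 + u = n + 1 \<and> a3 + u = n + 3)" by blast
    from rv vS have rv': "(v = 2 \<and> b0 = 2 \<and> b1 = 1 \<and> b3 = 1) \<or>
      (4 \<le> v \<and> 2 * v \<le> n \<and> b0 = v \<and> b1 + 1 = v \<and> b3 + 3 = v) \<or>
      (n < 2 * v \<and> 2 * v \<le> n + 2 \<and> b0 + v = n \<and> b1 + 1 = v \<and> b3 + 3 = v) \<or>
      (n + 2 < 2 * v \<and> 2 * v \<le> n + 6 \<and> b0 + v = n \<and> b1 + v = n + 1 \<and> b3 + 3 = v) \<or>
      (n + 6 < 2 * v \<and> b0 + v = n \<and> b1 + v = n + 1 \<and> b3 + v = n + 3)" by blast
    show ?thesis by (rule fin2[OF n u v ru' rv' sm mA mB])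
  qed
qed



lemma sum5: "(\<Sum>w<(5::nat). g w) = g 0 + g 1 + g 2 + g 3 + (g 4 :: real)"
  by (simp add: eval_nat_numeral)
lemma sum4: "(\<Sum>w<(4::nat). g w) = g 0 + g 1 + g 2 + (g 3 :: real)"
  by (simp add: eval_nat_numeral)
lemma sum3: "(\<Sum>w<(3::nat). g w) = g 0 + g 1 + (g 2 :: real)"
  by (simp add: eval_nat_numeral)
lemma up: "[1..<3] = [1, 2::nat]" "[1..<2] = [1::nat]" by (simp_all add: upt_rec)

lemma vs5:
  "vstring {0..<5} (cycle_edges 5) f 0 = [f 1 + f 4, f 2 + f 3]"
  "vstring {0..<5} (cycle_edges 5) f 1 = [f 0 + f 2, f 3 + f 4]"
  "vstring {0..<5} (cycle_edges 5) f 2 = [f 1 + f 3, f 0 + f 4]"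
  "vstring {0..<5} (cycle_edges 5) f 3 = [f 2 + f 4, f 0 + f 1]"
  "vstring {0..<5} (cycle_edges 5) f 4 = [f 0 + f 3, f 1 + f 2]"
  by (simp_all add: vstring_cycle cd_def sum5 up ac_simps)

lemma vs4:
  "vstring {0..<4} (cycle_edges 4) f 0 = [f 1 + f 3, f 2]"
  "vstring {0..<4} (cycle_edges 4) f 1 = [f 0 + f 2, f 3]"
  "vstring {0..<4} (cycle_edges 4) f 2 = [f 1 + f 3, f 0]"
  "vstring {0..<4} (cycle_edges 4) f 3 = [f 0 + f 2, f 1]"
  by (simp_all add: vstring_cycle cd_def sum4 up ac_simps)

lemma vs3:
  "vstring {0..<3} (cycle_edges 3) f 0 = [f 1 + f 2]"
  "vstring {0..<3} (cycle_edges 3) f 1 = [f 0 + f 2]"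
  "vstring {0..<3} (cycle_edges 3) f 2 = [f 0 + f 1]"
  by (simp_all add: vstring_cycle cd_def sum3 up ac_simps)




lemma less5: "(x::nat) < 5 \<longleftrightarrow> x = 0 \<or> x = 1 \<or> x = 2 \<or> x = 3 \<or> x = 4" by auto
lemma less4: "(x::nat) < 4 \<longleftrightarrow> x = 0 \<or> x = 1 \<or> x = 2 \<or> x = 3" by auto
lemma less3: "(x::nat) < 3 \<longleftrightarrow> x = 0 \<or> x = 1 \<or> x = 2" by auto

lemma IDI_eqI:
  assumes "card (f ` V) = k" "inj_on (vstring V E f) V"
    "\<And>g. card (g ` V) < k \<Longrightarrow> \<not> inj_on (vstring V E g) V"
  shows "IDI V E = k"
  unfolding IDI_def
proof (rule Least_equality)
  show "\<exists>f. card (f ` V) = k \<and> inj_on (vstring V E f) V" using assms(1,2) by blast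
next
  fix y assume "\<exists>f. card (f ` V) = y \<and> inj_on (vstring V E f) V"
  then obtain g where "card (g ` V) = y" "inj_on (vstring V E g) V" by blast
  then show "k \<le> y" using assms(3)[of g] by (meson not_le)
qed

lemma card_le2:
  assumes "finite A" "card A \<le> 2"
  shows "\<exists>a b. A \<subseteq> {a, b}"
proof -
  consider "card A = 0" | "card A = 1" | "card A = 2" using assms(2) by linarith
  then show ?thesis
  proof cases
    case 1 then show ?thesis using assms(1) by auto
  next
    case 2 then show ?thesis by (metis card_1_singletonE insert_absorb2 subset_refl)
  next
    case 3 then show ?thesis by (metis card_2_iff subset_refl)
  qed
qed

lemma low5:
  assumes "f ` {0..<5} \<subseteq> {a, b}"
  shows "\<not> inj_on (vstring {0..<5} (cycle_edges 5) f) {0..<5}"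
proof
  assume inj: "inj_on (vstring {0..<5} (cycle_edges 5) f) {0..<5}"
  have d: "vstring {0..<5} (cycle_edges 5) f x \<noteq> vstring {0..<5} (cycle_edges 5) f y"
    if "x < 5" "y < 5" "x \<noteq> y" for x y
    using inj that by (auto simp: inj_on_def)
  have mem: "\<And>i. i < 5 \<Longrightarrow> f i \<in> {a, b}" using assms by (auto simp: image_subset_iff)
  have fv: "f 0 = a \<or> f 0 = b" "f 1 = a \<or> f 1 = b" "f 2 = a \<or> f 2 = b" "f 3 = a \<or> f 3 = b" "f 4 = a \<or> f 4 = b" using mem[of 0] mem[of 1] mem[of 2] mem[of 3] mem[of 4] by simp_all
  have ne1: "[f 1 + f 4, f 2 + f 3] \<noteq> [f 0 + f 2, f 3 + f 4]" using d[of 0 1, unfolded vs5] by simp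
  have ne2: "[f 1 + f 4, f 2 + f 3] \<noteq> [f 1 + f 3, f 0 + f 4]" using d[of 0 2, unfolded vs5] by simp
  have ne3: "[f 1 + f 4, f 2 + f 3] \<noteq> [f 2 + f 4, f 0 + f 1]" using d[of 0 3, unfolded vs5] by simp
  have ne4: "[f 1 + f 4, f 2 + f 3] \<noteq> [f 0 + f 3, f 1 + f 2]" using d[of 0 4, unfolded vs5] by simp
  have ne5: "[f 0 + f 2, f 3 + f 4] \<noteq> [f 1 + f 3, f 0 + f 4]" using d[of 1 2, unfolded vs5] by simp
  have ne6: "[f 0 + f 2, f 3 + f 4] \<noteq> [f 2 + f 4, f 0 + f 1]" using d[of 1 3, unfolded vs5] by simp
  have ne7: "[f 0 + f 2, f 3 + f 4] \<noteq> [f 0 + f 3, f 1 + f 2]" using d[of 1 4, unfolded vs5] by simp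
  have ne8: "[f 1 + f 3, f 0 + f 4] \<noteq> [f 2 + f 4, f 0 + f 1]" using d[of 2 3, unfolded vs5] by simp
  have ne9: "[f 1 + f 3, f 0 + f 4] \<noteq> [f 0 + f 3, f 1 + f 2]" using d[of 2 4, unfolded vs5] by simp
  have ne10: "[f 2 + f 4, f 0 + f 1] \<noteq> [f 0 + f 3, f 1 + f 2]" using d[of 3 4, unfolded vs5] by simp
  show False using fv ne1 ne2 ne3 ne4 ne5 ne6 ne7 ne8 ne9 ne10 by (elim disjE) (simp_all add: ac_simps)
qed

lemma low4:
  assumes "f ` {0..<4} \<subseteq> {a, b}"
  shows "\<not> inj_on (vstring {0..<4} (cycle_edges 4) f) {0..<4}"
proof
  assume inj: "inj_on (vstring {0..<4} (cycle_edges 4) f) {0..<4}"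
  have d: "vstring {0..<4} (cycle_edges 4) f x \<noteq> vstring {0..<4} (cycle_edges 4) f y"
    if "x < 4" "y < 4" "x \<noteq> y" for x y
    using inj that by (auto simp: inj_on_def)
  have mem: "\<And>i. i < 4 \<Longrightarrow> f i \<in> {a, b}" using assms by (auto simp: image_subset_iff)
  have fv: "f 0 = a \<or> f 0 = b" "f 1 = a \<or> f 1 = b" "f 2 = a \<or> f 2 = b" "f 3 = a \<or> f 3 = b" using mem[of 0] mem[of 1] mem[of 2] mem[of 3] by simp_all
  have ne11: "[f 1 + f 3, f 2] \<noteq> [f 0 + f 2, f 3]" using d[of 0 1, unfolded vs4] by simp
  have ne12: "[f 1 + f 3, f 2] \<noteq> [f 1 + f 3, f 0]" using d[of 0 2, unfolded vs4] by simp
  have ne13: "[f 1 + f 3, f 2] \<noteq> [f 0 + f 2, f 1]" using d[of 0 3, unfolded vs4] by simp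
  have ne14: "[f 0 + f 2, f 3] \<noteq> [f 1 + f 3, f 0]" using d[of 1 2, unfolded vs4] by simp
  have ne15: "[f 0 + f 2, f 3] \<noteq> [f 0 + f 2, f 1]" using d[of 1 3, unfolded vs4] by simp
  have ne16: "[f 1 + f 3, f 0] \<noteq> [f 0 + f 2, f 1]" using d[of 2 3, unfolded vs4] by simp
  show False using fv ne11 ne12 ne13 ne14 ne15 ne16 by (elim disjE) (simp_all add: ac_simps)
qed

lemma low3:
  assumes "f ` {0..<3} \<subseteq> {a, b}"
  shows "\<not> inj_on (vstring {0..<3} (cycle_edges 3) f) {0..<3}"
proof
  assume inj: "inj_on (vstring {0..<3} (cycle_edges 3) f) {0..<3}"
  have d: "vstring {0..<3} (cycle_edges 3) f x \<noteq> vstring {0..<3} (cycle_edges 3) f y"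
    if "x < 3" "y < 3" "x \<noteq> y" for x y
    using inj that by (auto simp: inj_on_def)
  have mem: "\<And>i. i < 3 \<Longrightarrow> f i \<in> {a, b}" using assms by (auto simp: image_subset_iff)
  have fv: "f 0 = a \<or> f 0 = b" "f 1 = a \<or> f 1 = b" "f 2 = a \<or> f 2 = b" using mem[of 0] mem[of 1] mem[of 2] by simp_all
  have ne17: "[f 1 + f 2] \<noteq> [f 0 + f 2]" using d[of 0 1, unfolded vs3] by simp
  have ne18: "[f 1 + f 2] \<noteq> [f 0 + f 1]" using d[of 0 2, unfolded vs3] by simp
  have ne19: "[f 0 + f 2] \<noteq> [f 0 + f 1]" using d[of 1 2, unfolded vs3] by simp
  show False using fv ne17 ne18 ne19 by (elim disjE) (simp_all add: ac_simps)
qed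

lemma lowk:
  assumes "card (g ` {0..<n}) < 3"
  shows "\<exists>a b. g ` {0..<(n::nat)} \<subseteq> {a, b}"
  using card_le2[of "g ` {0..<n}"] assms by auto

lemma five: "IDI {0..<5} (cycle_edges 5) = 3"
proof (rule IDI_eqI[where f = "\<lambda>w::nat. if w = 3 then 1 else if w = 4 then 2 else 0"])
  have V: "{0..<5::nat} = {0,1,2,3,4}" by auto
  show "card ((\<lambda>w::nat. if w = 3 then 1 else if w = 4 then 2 else 0 :: real) ` {0..<5}) = 3"
    unfolding V by simp
  show "inj_on (vstring {0..<5} (cycle_edges 5) (\<lambda>w::nat. if w = 3 then 1 else if w = 4 then 2 else 0 :: real)) {0..<5}"
    by (rule inj_onI) (auto simp: less5 vs5 vs5[simplified])
next
  fix g :: "nat \<Rightarrow> real" assume "card (g ` {0..<5}) < 3"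
  then obtain a b where "g ` {0..<5} \<subseteq> {a, b}" using lowk by blast
  then show "\<not> inj_on (vstring {0..<5} (cycle_edges 5) g) {0..<5}" by (rule low5)
qed

lemma four: "IDI {0..<4} (cycle_edges 4) = 3"
proof (rule IDI_eqI[where f = "\<lambda>w::nat. if w = 2 then 1 else if w = 3 then 2 else 0"])
  have V: "{0..<4::nat} = {0,1,2,3}" by auto
  show "card ((\<lambda>w::nat. if w = 2 then 1 else if w = 3 then 2 else 0 :: real) ` {0..<4}) = 3"
    unfolding V by simp
  show "inj_on (vstring {0..<4} (cycle_edges 4) (\<lambda>w::nat. if w = 2 then 1 else if w = 3 then 2 else 0 :: real)) {0..<4}"
    by (rule inj_onI) (auto simp: less4 vs4 vs4[simplified])
next
  fix g :: "nat \<Rightarrow> real" assume "card (g ` {0..<4}) < 3"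
  then obtain a b where "g ` {0..<4} \<subseteq> {a, b}" using lowk by blast
  then show "\<not> inj_on (vstring {0..<4} (cycle_edges 4) g) {0..<4}" by (rule low4)
qed

lemma three: "IDI {0..<3} (cycle_edges 3) = 3"
proof (rule IDI_eqI[where f = "\<lambda>w. real w"])
  have V: "{0..<3::nat} = {0,1,2}" by auto
  show "card ((\<lambda>w. real w) ` {0..<3}) = 3"
    unfolding V by simp
  show "inj_on (vstring {0..<3} (cycle_edges 3) (\<lambda>w. real w)) {0..<3}"
    by (rule inj_onI) (auto simp: less3 vs3 vs3[simplified])
next
  fix g :: "nat \<Rightarrow> real" assume "card (g ` {0..<3}) < 3"
  then obtain a b where "g ` {0..<3} \<subseteq> {a, b}" using lowk by blast
  then show "\<not> inj_on (vstring {0..<3} (cycle_edges 3) g) {0..<3}" by (rule low3)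
qed


lemma rot_cd: "2 \<le> n \<Longrightarrow> w < n \<Longrightarrow> cd n 1 (if w + 1 = n then 0 else w + 1) = cd n 0 w"
  unfolding cd_def by (auto simp: min_def)

lemma rot_sum:
  assumes "2 \<le> n"
  shows "(\<Sum>w<n. G (cd n 1 w)) = (\<Sum>w<n. G (cd n 0 w))"
proof -
  let ?h = "\<lambda>w. if w + 1 = n then 0 else w + 1"
  have bij: "bij_betw ?h {..<n} {..<n}"
    by (rule bij_betw_byWitness[where f' = "\<lambda>w. if w = 0 then n - 1 else w - 1"]) (use assms in auto)
  have "(\<Sum>w<n. G (cd n 1 w)) = (\<Sum>w<n. G (cd n 1 (?h w)))"
    by (rule sum.reindex_bij_betw[OF bij, symmetric])
  also have "\<dots> = (\<Sum>w<n. G (cd n 0 w))"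
    by (rule sum.cong) (use assms rot_cd in auto)
  finally show ?thesis .
qed

lemma const_fail:
  assumes n: "6 \<le> n" and c: "card (g ` {0..<n}) < 2"
  shows "\<not> inj_on (vstring {0..<n} (cycle_edges n) g) {0..<n}"
proof
  assume inj: "inj_on (vstring {0..<n} (cycle_edges n) g) {0..<n}"
  have "g ` {0..<n} \<noteq> {}" using n by auto
  then have "card (g ` {0..<n}) \<noteq> 0" by simp
  with c have "card (g ` {0..<n}) = 1" by linarith
  then obtain c where "g ` {0..<n} = {c}" by (rule card_1_singletonE)
  then have gc: "\<And>w. w < n \<Longrightarrow> g w = c" by auto
  have "vstring {0..<n} (cycle_edges n) g 1 = vstring {0..<n} (cycle_edges n) g 0"
  proof -
    have "(\<Sum>w<n. if cd n v w = i then g w else 0) = (\<Sum>w<n. (\<lambda>d. if d = i then c else 0) (cd n v w))" for v i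
      by (rule sum.cong) (auto simp: gc)
    moreover have "(\<Sum>w<n. (\<lambda>d. if d = i then c else 0) (cd n 1 w)) = (\<Sum>w<n. (\<lambda>d. if d = i then c else 0) (cd n 0 w))" for i
      by (rule rot_sum) (use n in auto)
    ultimately show ?thesis using n by (simp add: vstring_cycle)
  qed
  then have "(1::nat) = 0" using inj n by (auto dest: inj_onD)
  then show False by simp
qed

definition f6 :: "nat \<Rightarrow> real" where "f6 w = (if w = 0 \<or> w = 1 \<or> w = 3 then 1 else 0)"

lemma sumS:
  assumes "4 \<le> n"
  shows "(\<Sum>w<n. if cd n u w = i then f6 w else 0) = of_int ((if cd n u 0 = i then 1 else 0) + (if cd n u 1 = i then 1 else 0) + (if cd n u 3 = i then 1 else (0::int)))"
proof -
  have "(\<Sum>w<n. if cd n u w = i then f6 w else 0) = (\<Sum>w<n. if w \<in> {0,1,3} then (if cd n u w = i then 1 else 0) else 0)"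
    by (rule sum.cong) (auto simp: f6_def)
  also have "\<dots> = (\<Sum>w\<in>{..<n} \<inter> {0,1,3}. (if cd n u w = i then 1 else 0))"
    by (rule sum.inter_restrict[symmetric]) simp
  also have "{..<n} \<inter> {0,1,3} = {0,1,3::nat}" using assms by auto
  finally show ?thesis by simp
qed

lemma inj6:
  assumes n: "6 \<le> n"
  shows "inj_on (vstring {0..<n} (cycle_edges n) f6) {0..<n}"
proof (rule inj_onI)
  fix u v assume u: "u \<in> {0..<n}" and v: "v \<in> {0..<n}"
    and eq: "vstring {0..<n} (cycle_edges n) f6 u = vstring {0..<n} (cycle_edges n) f6 v"
  from eq have "map (\<lambda>i. \<Sum>w<n. if cd n u w = i then f6 w else 0) [1..<n div 2 + 1] =
       map (\<lambda>i. \<Sum>w<n. if cd n v w = i then f6 w else 0) [1..<n div 2 + 1]"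
    using u v n by (simp add: vstring_cycle)
  then have E: "\<And>i. 1 \<le> i \<Longrightarrow> i \<le> n div 2 \<Longrightarrow>
      (\<Sum>w<n. if cd n u w = i then f6 w else 0) = (\<Sum>w<n. if cd n v w = i then f6 w else 0)"
    by (auto simp: map_eq_conv)
  show "u = v"
  proof (rule core)
    show "6 \<le> n" "u < n" "v < n" using n u v by auto
  next
    fix i :: nat assume i: "1 \<le> i" "i \<le> n div 2"
    have n4: "4 \<le> n" using n by simp
    from E[OF i] have "(of_int ((if cd n u 0 = i then 1 else 0) + (if cd n u 1 = i then 1 else 0) + (if cd n u 3 = i then 1 else (0::int))) :: real)
   = of_int ((if cd n v 0 = i then 1 else 0) + (if cd n v 1 = i then 1 else 0) + (if cd n v 3 = i then 1 else 0))"
      by (simp only: sumS[OF n4])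
    then show "(if cd n u 0 = i then 1 else 0) + (if cd n u 1 = i then 1 else 0) + (if cd n u 3 = i then 1 else (0::int))
   = (if cd n v 0 = i then 1 else 0) + (if cd n v 1 = i then 1 else 0) + (if cd n v 3 = i then 1 else 0)"
      by (simp only: of_int_eq_iff)
  qed
qed

lemma card6:
  assumes n: "6 \<le> n"
  shows "card (f6 ` {0..<n}) = 2"
proof -
  have "f6 ` {0..<n} = {0, 1}"
  proof
    show "f6 ` {0..<n} \<subseteq> {0, 1}" by (auto simp: f6_def)
    have "f6 2 = 0" "f6 0 = 1" by (simp_all add: f6_def)
    moreover have "(2::nat) \<in> {0..<n}" "(0::nat) \<in> {0..<n}" using n by auto
    ultimately show "{0, 1} \<subseteq> f6 ` {0..<n}" by (metis empty_subsetI image_eqI insert_subset)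
  qed
  then show ?thesis by simp
qed

lemma six: "6 \<le> n \<Longrightarrow> IDI {0..<n} (cycle_edges n) = 2"
  by (rule IDI_eqI[OF card6 inj6 const_fail])

theorem mainTheorem9:
  "(\<forall>n::nat. n \<ge> 6 \<longrightarrow> IDI {0..<n} (cycle_edges n) = 2)
   \<and> IDI {0..<3} (cycle_edges 3) = 3
   \<and> IDI {0..<4} (cycle_edges 4) = 3
   \<and> IDI {0..<5} (cycle_edges 5) = 3"
  using six three four five by blast


end
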